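(* Let $k\ge2$, $\Sigma_k=\{0,1,\dots,k-1\}$, and let $(f(n))_{n\ge0}$ be a $k$-regular sequence. Let $T=(Q,\Sigma_k,\Sigma_k,\delta,q_0,F,\rho)$ be a functional finite-state transducer with transitions on single letters only but arbitrary words as outputs on each transition, where $Q=\{q_0,\dots,q_{r-1}\}$, $\delta:Q\times\Sigma_k\to Q$ is the transition function, $\rho:Q\times\Sigma_k\to\Sigma_k^*$ is the output function, and $F\subseteq Q$ is the set of final states; $\delta$ and $\rho$ are extended to $\Sigma_k^*$ in the obvious way, and for an input word $x$ the output $T(x)=\rho(q_0,x)$ is defined when $\delta(q_0,x)\in F$. Define $g(n)=f(T((n)_k))$, where $(n)_k$ is the canonical base-$k$ representation of $n$ and $f$ applied to a word over $\Sigma_k$ means $f$ evaluated at the integer that word represents in base $k$ (most significant digit first), assuming $T((n)_k)$ is defined for every $n$. Then $(g(n))_{n\ge0}$ is also a $k$-regular sequence.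
   Context: A sequence $(a_n)_{n\ge0}$ is $k$-regular if there is a finite subset $S$ of its $k$-kernel $\{(a_{k^en+i})_{n\ge0}: e\ge0, 0\le i<k^e\}$ such that every element of the $k$-kernel is a linear combination of elements of $S$; equivalently, there exist a row vector $v$, a matrix-valued morphism $\mu$ on $\Sigma_k^*$ and a column vector $w$ with $a_n=v\mu((n)_k)w$ for all $n$ (a linear representation, also satisfying $a_n=v\mu(x)w$ for any base-$k$ representation $x$ of $n$ with leading zeros). A transducer is functional if every input yields at most one output. *)

theory Defs
  imports Main
begin

fun base_rep :: "nat \<Rightarrow> nat \<Rightarrow> nat list" where
  "base_rep k n = (if k < 2 \<or> n = 0 then [] else base_rep k (n div k) @ [n mod k])"

definition word_val :: "nat \<Rightarrow> nat list \<Rightarrow> nat" where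
  "word_val k w = foldl (\<lambda>a d. a * k + d) 0 w"

definition k_kernel :: "nat \<Rightarrow> (nat \<Rightarrow> 'a) \<Rightarrow> (nat \<Rightarrow> 'a) set" where
  "k_kernel k f = {(\<lambda>n. f (k ^ e * n + i)) | e i. i < k ^ e}"

definition k_regular :: "nat \<Rightarrow> (nat \<Rightarrow> 'a::comm_ring_1) \<Rightarrow> bool" where
  "k_regular k f \<longleftrightarrow> (\<exists>S. finite S \<and> S \<subseteq> k_kernel k f \<and>
     (\<forall>h\<in>k_kernel k f. \<exists>c. h = (\<lambda>n. \<Sum>s\<in>S. c s * s n)))"

fun delta_star :: "('q \<Rightarrow> nat \<Rightarrow> 'q) \<Rightarrow> 'q \<Rightarrow> nat list \<Rightarrow> 'q" where
  "delta_star \<delta> q [] = q"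
| "delta_star \<delta> q (a # w) = delta_star \<delta> (\<delta> q a) w"

fun rho_star :: "('q \<Rightarrow> nat \<Rightarrow> 'q) \<Rightarrow> ('q \<Rightarrow> nat \<Rightarrow> nat list) \<Rightarrow> 'q \<Rightarrow> nat list \<Rightarrow> nat list" where
  "rho_star \<delta> \<rho> q [] = []"
| "rho_star \<delta> \<rho> q (a # w) = \<rho> q a @ rho_star \<delta> \<rho> (\<delta> q a) w"

end

theory Submission
  imports Defs
begin

definition subr :: "'a::comm_ring_1 set \<Rightarrow> bool" where
  "subr R \<longleftrightarrow> 0 \<in> R \<and> 1 \<in> R \<and> (\<forall>x\<in>R. \<forall>y\<in>R. x + y \<in> R \<and> x * y \<in> R \<and> - x \<in> R)"

definition submod :: "'a::comm_ring_1 set \<Rightarrow> 'a set \<Rightarrow> bool" where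
  "submod S I \<longleftrightarrow> 0 \<in> I \<and> (\<forall>x\<in>I. \<forall>y\<in>I. x + y \<in> I) \<and> (\<forall>s\<in>S. \<forall>x\<in>I. s * x \<in> I)"

inductive_set spn :: "'a::comm_ring_1 set \<Rightarrow> 'a set \<Rightarrow> 'a set" for S B where
  spn0: "0 \<in> spn S B"
| spnS: "x \<in> spn S B \<Longrightarrow> s \<in> S \<Longrightarrow> b \<in> B \<Longrightarrow> x + s * b \<in> spn S B"

definition noeth :: "'a::comm_ring_1 set \<Rightarrow> bool" where
  "noeth R \<longleftrightarrow> (\<forall>I. submod R I \<longrightarrow> I \<subseteq> R \<longrightarrow> (\<exists>B. finite B \<and> B \<subseteq> I \<and> I \<subseteq> spn R B))"

lemma subrD:
  assumes "subr R"
  shows "0 \<in> R" "1 \<in> R" "x \<in> R \<Longrightarrow> y \<in> R \<Longrightarrow> x + y \<in> R"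
    "x \<in> R \<Longrightarrow> y \<in> R \<Longrightarrow> x * y \<in> R" "x \<in> R \<Longrightarrow> - x \<in> R"
  using assms unfolding subr_def by blast+

lemma subr_diff: "subr R \<Longrightarrow> x \<in> R \<Longrightarrow> y \<in> R \<Longrightarrow> x - y \<in> R"
  using subrD(3)[of R x "- y"] subrD(5)[of R y] by simp

lemma subr_sum: "subr R \<Longrightarrow> (\<And>i. i \<in> A \<Longrightarrow> g i \<in> R) \<Longrightarrow> sum g A \<in> R"
proof (induction A rule: infinite_finite_induct)
  case (insert x F)
  then show ?case using subrD(3)[of R "g x" "sum g F"] by simp
qed (auto simp: subrD subr_diff)

lemma submodD:
  assumes "submod S I"
  shows "0 \<in> I" "x \<in> I \<Longrightarrow> y \<in> I \<Longrightarrow> x + y \<in> I" "s \<in> S \<Longrightarrow> x \<in> I \<Longrightarrow> s * x \<in> I"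
  using assms unfolding submod_def by auto

lemma spn_sub: "submod S I \<Longrightarrow> B \<subseteq> I \<Longrightarrow> spn S B \<subseteq> I"
proof
  fix x assume a: "submod S I" "B \<subseteq> I" and "x \<in> spn S B"
  from this(3) show "x \<in> I" by (induction rule: spn.induct) (use a in \<open>auto simp: submodD\<close>)
qed

lemma spn_add: assumes "y \<in> spn S B" "x \<in> spn S B" shows "x + y \<in> spn S B"
  using assms
proof (induction y rule: spn.induct)
  case spn0 then show ?case by simp
next
  case (spnS y s b)
  then have "(x + y) + s * b \<in> spn S B" by (intro spn.spnS) auto
  then show ?case by (simp add: add.assoc)
qed

lemma spn_base: "s \<in> S \<Longrightarrow> b \<in> B \<Longrightarrow> s * b \<in> spn S B"
  using spn.spnS[OF spn0] by fastforce

lemma spn_mono: "x \<in> spn S B \<Longrightarrow> S \<subseteq> S' \<Longrightarrow> B \<subseteq> B' \<Longrightarrow> x \<in> spn S' B'"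
  by (induction rule: spn.induct) (auto intro: spn.intros)

lemma spn_smult: assumes "x \<in> spn S B" "subr S" "r \<in> S" shows "r * x \<in> spn S B"
  using assms
proof (induction x rule: spn.induct)
  case spn0 then show ?case by (simp add: spn.spn0)
next
  case (spnS x s b)
  then have "r * x + (r * s) * b \<in> spn S B" by (intro spn.spnS) (auto simp: subrD subr_diff)
  then show ?case by (simp add: algebra_simps)
qed

lemma spn_sub_mem: "subr S \<Longrightarrow> x \<in> spn S B \<Longrightarrow> y \<in> spn S B \<Longrightarrow> x - y \<in> spn S B"
  using spn_add[of "(-1) * y" S B x] spn_smult[of y S B "-1"] by (auto simp: subrD subr_diff)

lemma spn_empty: "spn S {} = {0}"
proof -
  have "x \<in> spn S {} \<Longrightarrow> x = 0" for x by (induction rule: spn.induct) auto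
  then show ?thesis using spn0 by blast
qed

lemma subr_int: "subr (range of_int :: 'a::comm_ring_1 set)"
  unfolding subr_def
proof (intro conjI ballI)
  show "0 \<in> range of_int" by (metis of_int_0 rangeI)
  show "1 \<in> range of_int" by (metis of_int_1 rangeI)
  fix x y :: 'a assume "x \<in> range of_int" "y \<in> range of_int"
  then obtain a b where "x = of_int a" "y = of_int b" by auto
  then show "x + y \<in> range of_int" by (metis of_int_add rangeI)
  show "x * y \<in> range of_int" using \<open>x = _\<close> \<open>y = _\<close> by (metis of_int_mult rangeI)
  show "- x \<in> range of_int" using \<open>x = _\<close> by (metis of_int_minus rangeI)
qed

lemma noeth_int: "noeth (range of_int :: 'a::comm_ring_1 set)"
  unfolding noeth_def
proof (intro allI impI)
  fix I :: "'a set" assume I: "submod (range of_int) I" "I \<subseteq> range of_int"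
  define J where "J = {z::int. of_int z \<in> I}"
  have J0: "0 \<in> J" using submodD(1)[OF I(1)] by (simp add: J_def)
  have Jm: "z * j \<in> J" if "j \<in> J" for z j
    using submodD(3)[OF I(1), of "of_int z" "of_int j"] that by (auto simp: J_def)
  have Ja: "i + j \<in> J" if "i \<in> J" "j \<in> J" for i j
    using submodD(2)[OF I(1), of "of_int i" "of_int j"] that by (auto simp: J_def)
  show "\<exists>B. finite B \<and> B \<subseteq> I \<and> I \<subseteq> spn (range of_int) B"
  proof (cases "J \<subseteq> {0}")
    case True
    have "I \<subseteq> {0}"
    proof
      fix x assume "x \<in> I"
      then obtain z where "x = of_int z" using I(2) by auto
      then show "x \<in> {0}" using True \<open>x \<in> I\<close> by (auto simp: J_def)
    qed
    then show ?thesis by (intro exI[of _ "{}"]) (auto simp: spn_empty)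
  next
    case False
    then obtain z where z: "z \<in> J" "z \<noteq> 0" by auto
    have "\<bar>z\<bar> \<in> J" using Jm[OF z(1), of "-1"] z(1) by (cases "z < 0") auto
    then have ex: "\<exists>d. d > 0 \<and> d \<in> J" using z(2) by (intro exI[of _ "\<bar>z\<bar>"]) auto
    then have exn: "\<exists>n::nat. n > 0 \<and> int n \<in> J" by (metis zero_less_imp_eq_int)
    define n where "n = (LEAST n::nat. n > 0 \<and> int n \<in> J)"
    have n: "n > 0" "int n \<in> J"
      using LeastI_ex[of "\<lambda>n::nat. n > 0 \<and> int n \<in> J", OF exn] by (auto simp: n_def)
    have nmin: "m = 0" if "m < n" "int m \<in> J" for m
      using not_less_Least[of m "\<lambda>n::nat. n > 0 \<and> int n \<in> J"] that by (auto simp: n_def)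
    define d where "d = int n"
    have d: "d > 0" "d \<in> J" using n by (auto simp: d_def)
    have dvd: "j = (j div d) * d" if "j \<in> J" for j
    proof -
      have "j + (- (j div d)) * d \<in> J" using Ja[OF that Jm[OF d(2)]] .
      moreover have "j + (- (j div d)) * d = j mod d" by (simp add: minus_div_mult_eq_mod[symmetric])
      ultimately have "j mod d \<in> J" by simp
      moreover have "j mod d \<ge> 0" "j mod d < d" using d by auto
      ultimately have "nat (j mod d) = 0" using nmin[of "nat (j mod d)"] by (auto simp: d_def)
      then have "j mod d = 0" using \<open>j mod d \<ge> 0\<close> by simp
      then show ?thesis by (metis div_mult_mod_eq add_0_right)
    qed
    show ?thesis
    proof (intro exI conjI)
      show "finite {of_int d :: 'a}" by simp
      show "{of_int d :: 'a} \<subseteq> I" using d by (auto simp: J_def)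
      show "I \<subseteq> spn (range of_int) {of_int d}"
      proof
        fix x assume "x \<in> I"
        then obtain j where j: "x = of_int j" using I(2) by auto
        then have "j \<in> J" using \<open>x \<in> I\<close> by (simp add: J_def)
        then have "x = of_int (j div d) * of_int d" using dvd j by (metis of_int_mult)
        then show "x \<in> spn (range of_int) {of_int d}" by (simp add: spn_base)
      qed
    qed
  qed
qed

definition ring_adj :: "'a::comm_ring_1 set \<Rightarrow> 'a \<Rightarrow> 'a set" where
  "ring_adj R a = {x. \<exists>p n. (\<forall>i. p i \<in> R) \<and> x = (\<Sum>i<n. p i * a ^ i)}"

lemma ring_adjI: "(\<forall>i. p i \<in> R) \<Longrightarrow> x = (\<Sum>i<n. p i * a ^ i) \<Longrightarrow> x \<in> ring_adj R a"
  unfolding ring_adj_def by blast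

lemma pad_sum: "n \<le> N \<Longrightarrow> (\<Sum>i<n. p i * (a::'a::comm_ring_1) ^ i) = (\<Sum>i<N. (if i < n then p i else 0) * a ^ i)"
proof (induction N)
  case 0 then show ?case by simp
next
  case (Suc N)
  show ?case
  proof (cases "n = Suc N")
    case True
    then show ?thesis by (auto intro!: sum.cong)
  next
    case False
    then have "n \<le> N" using Suc.prems by simp
    then show ?thesis using Suc.IH by simp
  qed
qed

definition shf1 :: "(nat \<Rightarrow> 'a::zero) \<Rightarrow> nat \<Rightarrow> 'a" where
  "shf1 p i = (if i = 0 then 0 else p (i - 1))"

lemma shf1_sum: "(a::'a::comm_ring_1) * (\<Sum>i<n. p i * a ^ i) = (\<Sum>i<Suc n. shf1 p i * a ^ i)"
  unfolding sum.lessThan_Suc_shift by (simp add: shf1_def sum_distrib_left mult_ac)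

lemma shf1_in: "0 \<in> R \<Longrightarrow> (\<forall>i. p i \<in> R) \<Longrightarrow> shf1 p i \<in> R"
  by (simp add: shf1_def)

lemma ring_adj_sub: "R \<subseteq> ring_adj R a"
proof
  fix c assume "c \<in> R"
  then show "c \<in> ring_adj R a" unfolding ring_adj_def
    by (intro CollectI exI[of _ "\<lambda>_. c"] exI[of _ 1]) auto
qed

lemma ring_adj_a: "subr R \<Longrightarrow> a \<in> ring_adj R a"
  unfolding ring_adj_def
  by (intro CollectI exI[of _ "\<lambda>i. if i = 1 then 1 else 0"] exI[of _ 2])
     (simp_all add: subrD numeral_2_eq_2)

lemma ring_adj_add: assumes "subr R" "x \<in> ring_adj R a" "y \<in> ring_adj R a"
  shows "x + y \<in> ring_adj R a"
proof -
  obtain p n q m where p: "\<forall>i. p i \<in> R" "x = (\<Sum>i<n. p i * a ^ i)"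
    and q: "\<forall>i. q i \<in> R" "y = (\<Sum>i<m. q i * a ^ i)"
    using assms(2,3) unfolding ring_adj_def by blast
  let ?N = "max n m"
  have "x + y = (\<Sum>i<?N. ((if i < n then p i else 0) + (if i < m then q i else 0)) * a ^ i)"
    using pad_sum[of n ?N p a] pad_sum[of m ?N q a] p q by (simp add: sum.distrib algebra_simps)
  moreover have "\<forall>i. ((if i < n then p i else 0) + (if i < m then q i else 0)) \<in> R"
    using p q assms(1) by (auto simp: subrD)
  ultimately show ?thesis by (intro ring_adjI[of "\<lambda>i. (if i < n then p i else 0) + (if i < m then q i else 0)"])
qed

lemma ring_adj_scal: assumes "subr R" "x \<in> ring_adj R a" "c \<in> R"
  shows "x * c \<in> ring_adj R a"
proof -
  obtain p n where p: "\<forall>i. p i \<in> R" "x = (\<Sum>i<n. p i * a ^ i)"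
    using assms(2) unfolding ring_adj_def by blast
  have "x * c = (\<Sum>i<n. (p i * c) * a ^ i)" using p by (simp add: sum_distrib_left sum_distrib_right mult_ac)
  moreover have "\<forall>i. p i * c \<in> R" using p assms by (auto simp: subrD)
  ultimately show ?thesis by (intro ring_adjI[of "\<lambda>i. p i * c"])
qed

lemma ring_adj_mula: assumes "subr R" "x \<in> ring_adj R a"
  shows "x * a \<in> ring_adj R a"
proof -
  obtain p n where p: "\<forall>i. p i \<in> R" "x = (\<Sum>i<n. p i * a ^ i)"
    using assms(2) unfolding ring_adj_def by blast
  have "x * a = (\<Sum>i<Suc n. shf1 p i * a ^ i)" using p shf1_sum[where a=a and n=n and p=p] by (simp add: mult.commute)
  moreover have "\<forall>i. shf1 p i \<in> R" using p assms by (auto simp: subrD shf1_in)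
  ultimately show ?thesis by (intro ring_adjI[of "shf1 p"])
qed

lemma ring_adj_mulpow: assumes "subr R" "x \<in> ring_adj R a"
  shows "x * a ^ j \<in> ring_adj R a"
proof (induction j)
  case 0 then show ?case using assms by simp
next
  case (Suc j)
  then show ?case using ring_adj_mula[OF assms(1) Suc] by (simp add: algebra_simps)
qed

lemma ring_adj_zero: "subr R \<Longrightarrow> 0 \<in> ring_adj R a"
  using ring_adj_sub subrD(1) by blast

lemma ring_adj_mult: assumes "subr R" "x \<in> ring_adj R a" "y \<in> ring_adj R a"
  shows "x * y \<in> ring_adj R a"
proof -
  obtain q m where q: "\<forall>i. q i \<in> R" "y = (\<Sum>i<m. q i * a ^ i)"
    using assms(3) unfolding ring_adj_def by blast
  have "x * (\<Sum>i<m. q i * a ^ i) \<in> ring_adj R a" for m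
  proof (induction m)
    case 0 then show ?case using ring_adj_zero[OF assms(1)] by simp
  next
    case (Suc m)
    have "x * q m * a ^ m \<in> ring_adj R a"
      using ring_adj_mulpow[OF assms(1) ring_adj_scal[OF assms(1,2)]] q by blast
    then show ?case using ring_adj_add[OF assms(1) Suc] by (simp add: algebra_simps)
  qed
  then show ?thesis using q by simp
qed

lemma ring_adj_uminus: assumes "subr R" "x \<in> ring_adj R a"
  shows "- x \<in> ring_adj R a"
  using ring_adj_scal[OF assms, of "-1"] assms(1) by (simp add: subrD)

lemma subr_ring_adj: "subr R \<Longrightarrow> subr (ring_adj R a)"
  unfolding subr_def[of "ring_adj R a"]
proof (intro conjI ballI)
  assume R: "subr R"
  show "0 \<in> ring_adj R a" using ring_adj_zero[OF R] .
  show "1 \<in> ring_adj R a" using ring_adj_sub subrD(2)[OF R] by blast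
  fix x y assume "x \<in> ring_adj R a" "y \<in> ring_adj R a"
  then show "x + y \<in> ring_adj R a" "x * y \<in> ring_adj R a" "- x \<in> ring_adj R a"
    using ring_adj_add[OF R] ring_adj_mult[OF R] ring_adj_uminus[OF R] by blast+
qed

lemma shfm_val: "(shf1 ^^ m) w i = (if i < m then 0 else w (i - m))"
proof (induction m arbitrary: i)
  case 0 then show ?case by simp
next
  case (Suc m) then show ?case by (auto simp: shf1_def)
qed

lemma shfm_sum: "(a::'a::comm_ring_1) ^ m * (\<Sum>i<n. w i * a ^ i) = (\<Sum>i<n + m. (shf1 ^^ m) w i * a ^ i)"
proof (induction m)
  case 0 then show ?case by simp
next
  case (Suc m)
  have "a ^ Suc m * (\<Sum>i<n. w i * a ^ i) = a * (a ^ m * (\<Sum>i<n. w i * a ^ i))" by (simp add: mult_ac)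
  also have "\<dots> = (\<Sum>i<Suc (n + m). shf1 ((shf1 ^^ m) w) i * a ^ i)" using Suc shf1_sum by metis
  finally show ?case by simp
qed

lemma shfm_in: "0 \<in> R \<Longrightarrow> (\<forall>i. w i \<in> R) \<Longrightarrow> (shf1 ^^ m) w i \<in> R"
  by (simp add: shfm_val)

lemma subr_pow: "subr R \<Longrightarrow> x \<in> R \<Longrightarrow> x ^ n \<in> R"
  by (induction n) (auto simp: subrD)

lemma noeth_step:
  assumes R: "subr R" and N: "noeth R"
  shows "noeth (ring_adj R a)"
  unfolding noeth_def
proof (intro allI impI)
  fix I assume I: "submod (ring_adj R a) I" "I \<subseteq> ring_adj R a"
  define R1 where "R1 = ring_adj R a"
  have R1: "subr R1" "R \<subseteq> R1" "a \<in> R1"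
    using subr_ring_adj[OF R] ring_adj_sub ring_adj_a[OF R] by (auto simp: R1_def)
  have I1: "submod R1 I" using I(1) by (simp add: R1_def)
  define Lc where "Lc d = {c. \<exists>p. (\<forall>i. p i \<in> R) \<and> p d = c \<and> (\<Sum>i<Suc d. p i * a ^ i) \<in> I}" for d
  have Lsub: "Lc d \<subseteq> R" for d unfolding Lc_def by auto
  have Lmod: "submod R (Lc d)" for d
    unfolding submod_def
  proof (intro conjI ballI)
    show "0 \<in> Lc d" unfolding Lc_def using subrD(1)[OF R] submodD(1)[OF I1]
      by (intro CollectI exI[of _ "\<lambda>_. 0"]) auto
    fix x y assume "x \<in> Lc d" "y \<in> Lc d"
    then obtain p q where p: "\<forall>i. p i \<in> R" "p d = x" "(\<Sum>i<Suc d. p i * a ^ i) \<in> I"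
      and q: "\<forall>i. q i \<in> R" "q d = y" "(\<Sum>i<Suc d. q i * a ^ i) \<in> I"
      unfolding Lc_def by blast
    have "(\<Sum>i<Suc d. (p i + q i) * a ^ i) = (\<Sum>i<Suc d. p i * a ^ i) + (\<Sum>i<Suc d. q i * a ^ i)"
      by (simp add: sum.distrib distrib_right)
    then have "(\<Sum>i<Suc d. (p i + q i) * a ^ i) \<in> I" using submodD(2)[OF I1] p q by simp
    then show "x + y \<in> Lc d" unfolding Lc_def using p q R
      by (intro CollectI exI[of _ "\<lambda>i. p i + q i"]) (auto simp: subrD)
  next
    fix s x assume "s \<in> R" "x \<in> Lc d"
    then obtain p where p: "\<forall>i. p i \<in> R" "p d = x" "(\<Sum>i<Suc d. p i * a ^ i) \<in> I"
      unfolding Lc_def by blast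
    have "(\<Sum>i<Suc d. (s * p i) * a ^ i) = s * (\<Sum>i<Suc d. p i * a ^ i)"
      by (simp add: sum_distrib_left mult.assoc del: sum.lessThan_Suc)
    then have "(\<Sum>i<Suc d. (s * p i) * a ^ i) \<in> I"
      using submodD(3)[OF I1] p \<open>s \<in> R\<close> R1(2) by auto
    then show "s * x \<in> Lc d" unfolding Lc_def using p R \<open>s \<in> R\<close>
      by (intro CollectI exI[of _ "\<lambda>i. s * p i"]) (auto simp: subrD)
  qed
  have Lmono1: "Lc d \<subseteq> Lc (Suc d)" for d
  proof
    fix c assume "c \<in> Lc d"
    then obtain p where p: "\<forall>i. p i \<in> R" "p d = c" "(\<Sum>i<Suc d. p i * a ^ i) \<in> I"
      unfolding Lc_def by blast
    have "(\<Sum>i<Suc (Suc d). shf1 p i * a ^ i) = a * (\<Sum>i<Suc d. p i * a ^ i)"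
      using shf1_sum by metis
    then have "(\<Sum>i<Suc (Suc d). shf1 p i * a ^ i) \<in> I"
      using submodD(3)[OF I1] p R1(3) by auto
    then show "c \<in> Lc (Suc d)" unfolding Lc_def using p R
      by (intro CollectI exI[of _ "shf1 p"]) (auto simp: subrD shf1_in shf1_def)
  qed
  have Lmono: "d \<le> d' \<Longrightarrow> Lc d \<subseteq> Lc d'" for d d'
    using lift_Suc_mono_le[of Lc, OF Lmono1] by blast
  define L where "L = (\<Union>d. Lc d)"
  have Lm: "submod R L" unfolding submod_def
  proof (intro conjI ballI)
    show "0 \<in> L" using submodD(1)[OF Lmod] by (auto simp: L_def)
    fix x y assume "x \<in> L" "y \<in> L"
    then obtain d d' where "x \<in> Lc d" "y \<in> Lc d'" by (auto simp: L_def)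
    then have "x \<in> Lc (max d d')" "y \<in> Lc (max d d')"
      using Lmono[of d "max d d'"] Lmono[of d' "max d d'"] by auto
    then show "x + y \<in> L" using submodD(2)[OF Lmod] by (auto simp: L_def)
  next
    fix s x assume "s \<in> R" "x \<in> L"
    then show "s * x \<in> L" using submodD(3)[OF Lmod] by (auto simp: L_def)
  qed
  have "L \<subseteq> R" unfolding L_def using Lsub by blast
  have "\<forall>I. submod R I \<longrightarrow> I \<subseteq> R \<longrightarrow> (\<exists>B. finite B \<and> B \<subseteq> I \<and> I \<subseteq> spn R B)"
    using N unfolding noeth_def .
  then have "\<exists>G. finite G \<and> G \<subseteq> L \<and> L \<subseteq> spn R G" using Lm \<open>L \<subseteq> R\<close> by blast
  then obtain G where G: "finite G" "G \<subseteq> L" "L \<subseteq> spn R G" by blast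
  define dg where "dg g = (SOME d. g \<in> Lc d)" for g
  have dg: "g \<in> Lc (dg g)" if "g \<in> G" for g
  proof -
    have "\<exists>d. g \<in> Lc d" using that G(2) unfolding L_def by blast
    then show ?thesis unfolding dg_def by (rule someI_ex)
  qed
  define D where "D = Max (insert 0 (dg ` G))"
  have "G \<subseteq> Lc D"
  proof
    fix g assume "g \<in> G"
    then have "dg g \<le> D" unfolding D_def using G(1) by (intro Max_ge) auto
    then show "g \<in> Lc D" using dg[OF \<open>g \<in> G\<close>] Lmono[OF \<open>dg g \<le> D\<close>] by blast
  qed
  then have sGD: "spn R G \<subseteq> Lc D" by (rule spn_sub[OF Lmod])
  have LD: "Lc d \<subseteq> Lc D" for d
  proof -
    have "Lc d \<subseteq> L" unfolding L_def by blast
    then show ?thesis using G(3) sGD by blast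
  qed
  have exB: "\<exists>B. finite B \<and> B \<subseteq> Lc d \<and> Lc d \<subseteq> spn R B" for d
  proof -
    have "\<forall>I. submod R I \<longrightarrow> I \<subseteq> R \<longrightarrow> (\<exists>B. finite B \<and> B \<subseteq> I \<and> I \<subseteq> spn R B)"
      using N unfolding noeth_def .
    then show ?thesis using Lmod[of d] Lsub[of d] by blast
  qed
  define Gd where "Gd d = (SOME B. finite B \<and> B \<subseteq> Lc d \<and> Lc d \<subseteq> spn R B)" for d
  have Gd: "finite (Gd d)" "Gd d \<subseteq> Lc d" "Lc d \<subseteq> spn R (Gd d)" for d
    using someI_ex[OF exB[of d]] unfolding Gd_def by auto
  define W where "W d c = (SOME p. (\<forall>i. p i \<in> R) \<and> p d = c \<and> (\<Sum>i<Suc d. p i * a ^ i) \<in> I)" for d c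
  have W: "(\<forall>i. W d c i \<in> R) \<and> W d c d = c \<and> (\<Sum>i<Suc d. W d c i * a ^ i) \<in> I" if "c \<in> Lc d" for d c
  proof -
    have "\<exists>p. (\<forall>i. p i \<in> R) \<and> p d = c \<and> (\<Sum>i<Suc d. p i * a ^ i) \<in> I"
      using that unfolding Lc_def by blast
    then show ?thesis unfolding W_def by (rule someI_ex)
  qed
  define E where "E d c = (\<Sum>i<Suc d. W d c i * a ^ i)" for d c
  define B where "B = (\<Union>d\<in>{..D}. E d ` Gd d)"
  have Bfin: "finite B" using Gd(1) by (auto simp: B_def)
  have BI: "B \<subseteq> I" using W Gd(2) by (auto simp: B_def E_def)
  have key: "\<forall>x p. (\<forall>i. p i \<in> R) \<longrightarrow> x = (\<Sum>i<n. p i * a ^ i) \<longrightarrow> x \<in> I \<longrightarrow> x \<in> spn R1 B" for n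
  proof (induction n)
    case 0 then show ?case by (auto intro: spn.spn0)
  next
    case (Suc d)
    show ?case
    proof (intro allI impI)
      fix x p assume p: "\<forall>i. p i \<in> R" and x: "x = (\<Sum>i<Suc d. p i * a ^ i)" and xI: "x \<in> I"
      define d' where "d' = min d D"
      define m where "m = d - d'"
      have dm: "Suc d' + m = Suc d" "d' \<le> D" "d - m = d'" "m \<le> d" by (auto simp: d'_def m_def)
      have "p d \<in> Lc d" unfolding Lc_def using p x xI by blast
      then have "p d \<in> Lc d'" using LD by (cases "d \<le> D") (auto simp: d'_def)
      then have cs: "p d \<in> spn R (Gd d')" using Gd(3) by blast
      have sub: "\<exists>y q. y \<in> spn R1 B \<and> y \<in> I \<and> (\<forall>i. q i \<in> R) \<and> y = (\<Sum>i<Suc d. q i * a ^ i) \<and> q d = c"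
        if "c \<in> spn R (Gd d')" for c
        using that
      proof (induction c rule: spn.induct)
        case spn0
        show ?case using submodD(1)[OF I1] subrD(1)[OF R]
          by (intro exI[of _ 0] exI[of _ "\<lambda>_. 0"]) (auto intro: spn.spn0)
      next
        case (spnS c s g)
        from spnS.IH obtain y q where yq: "y \<in> spn R1 B" "y \<in> I" "\<forall>i. q i \<in> R" "y = (\<Sum>i<Suc d. q i * a ^ i)" "q d = c"
          by blast
        have gL: "g \<in> Lc d'" using \<open>g \<in> Gd d'\<close> Gd(2) by blast
        have EB: "E d' g \<in> B" using \<open>g \<in> Gd d'\<close> dm(2) by (auto simp: B_def)
        have sa: "s * a ^ m \<in> R1" using \<open>s \<in> R\<close> R1 by (auto simp: subrD subr_pow)
        define w where "w = W d' g"
        have w: "\<forall>i. w i \<in> R" "w d' = g" "E d' g \<in> I" using W[OF gL] by (auto simp: w_def E_def)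
        have z: "a ^ m * E d' g = (\<Sum>i<Suc d. (shf1 ^^ m) w i * a ^ i)"
          by (simp only: E_def w_def shfm_sum dm(1))
        define q' where "q' i = q i + s * (shf1 ^^ m) w i" for i
        show ?case
        proof (intro exI conjI)
          show "y + s * E d' g * a ^ m \<in> spn R1 B" using spn.spnS[OF yq(1) sa EB] by (simp add: mult_ac)
          show "y + s * E d' g * a ^ m \<in> I"
            using submodD(2)[OF I1 yq(2) submodD(3)[OF I1 sa w(3)]] by (simp add: mult_ac)
          show "\<forall>i. q' i \<in> R" using yq(3) w(1) R \<open>s \<in> R\<close> by (auto simp: q'_def subrD shfm_in)
          have "y + s * E d' g * a ^ m = y + s * (a ^ m * E d' g)" by (simp add: mult_ac)
          also have "\<dots> = (\<Sum>i<Suc d. q i * a ^ i) + (\<Sum>i<Suc d. s * (shf1 ^^ m) w i * a ^ i)"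
            unfolding z yq(4) by (simp add: sum_distrib_left mult.assoc del: sum.lessThan_Suc)
          also have "\<dots> = (\<Sum>i<Suc d. q i * a ^ i + s * (shf1 ^^ m) w i * a ^ i)"
            by (rule sum.distrib[symmetric])
          also have "\<dots> = (\<Sum>i<Suc d. q' i * a ^ i)"
            unfolding q'_def by (simp add: distrib_right del: sum.lessThan_Suc)
          finally show "y + s * E d' g * a ^ m = (\<Sum>i<Suc d. q' i * a ^ i)" .
          show "q' d = c + s * g" using yq(5) w(2) dm by (simp add: q'_def shfm_val)
        qed
      qed
      obtain y q where yq: "y \<in> spn R1 B" "y \<in> I" "\<forall>i. q i \<in> R" "y = (\<Sum>i<Suc d. q i * a ^ i)" "q d = p d"
        using sub[OF cs] by blast
      have "x - y = (\<Sum>i<d. (p i - q i) * a ^ i)"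
        using x yq(4,5) by (simp add: sum_subtractf left_diff_distrib)
      moreover have "\<forall>i. p i - q i \<in> R" using p yq(3) R by (auto simp: subr_diff)
      moreover have "x - y \<in> I"
      proof -
        have "-1 \<in> R1" using R1(1) by (simp add: subrD)
        then have "x + (-1) * y \<in> I" using submodD(2)[OF I1 xI submodD(3)[OF I1 _ yq(2)]] by blast
        then show ?thesis by simp
      qed
      ultimately have "x - y \<in> spn R1 B" using Suc.IH[rule_format, of "\<lambda>i. p i - q i" "x - y"] by blast
      then have "(x - y) + y \<in> spn R1 B" using spn_add[OF yq(1)] by blast
      then show "x \<in> spn R1 B" by simp
    qed
  qed
  show "\<exists>B. finite B \<and> B \<subseteq> I \<and> I \<subseteq> spn (ring_adj R a) B"
  proof (intro exI conjI)
    show "finite B" "B \<subseteq> I" by (fact Bfin, fact BI)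
    show "I \<subseteq> spn (ring_adj R a) B"
    proof
      fix x assume "x \<in> I"
      then obtain p n where "\<forall>i. p i \<in> R" "x = (\<Sum>i<n. p i * a ^ i)"
        using I(2) unfolding ring_adj_def by blast
      then have "x \<in> spn R1 B" using key[of n] \<open>x \<in> I\<close> by blast
      then show "x \<in> spn (ring_adj R a) B" by (simp add: R1_def)
    qed
  qed
qed

lemma noeth_subring: "finite G \<Longrightarrow> \<exists>R. subr R \<and> noeth R \<and> G \<subseteq> (R :: 'a::comm_ring_1 set)"
proof (induction G rule: finite_induct)
  case empty then show ?case using subr_int noeth_int by blast
next
  case (insert a G)
  then obtain R where R: "subr R" "noeth R" "G \<subseteq> R" by blast
  then show ?case using subr_ring_adj[OF R(1)] noeth_step[OF R(1,2)] ring_adj_sub[of R a] ring_adj_a[OF R(1)]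
    by (intro exI[of _ "ring_adj R a"]) blast
qed

definition vecs :: "'a::comm_ring_1 set \<Rightarrow> 'i set \<Rightarrow> ('i \<Rightarrow> 'a) set" where
  "vecs R Ix = {v. (\<forall>i\<in>Ix. v i \<in> R) \<and> (\<forall>i. i \<notin> Ix \<longrightarrow> v i = 0)}"

definition submodV :: "'a::comm_ring_1 set \<Rightarrow> ('i \<Rightarrow> 'a) set \<Rightarrow> bool" where
  "submodV S M \<longleftrightarrow> (\<lambda>_. 0) \<in> M \<and> (\<forall>x\<in>M. \<forall>y\<in>M. (\<lambda>i. x i + y i) \<in> M) \<and> (\<forall>s\<in>S. \<forall>x\<in>M. (\<lambda>i. s * x i) \<in> M)"

inductive_set spnV :: "'a::comm_ring_1 set \<Rightarrow> ('i \<Rightarrow> 'a) set \<Rightarrow> ('i \<Rightarrow> 'a) set" for S B where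
  spnV0: "(\<lambda>_. 0) \<in> spnV S B"
| spnVS: "x \<in> spnV S B \<Longrightarrow> s \<in> S \<Longrightarrow> b \<in> B \<Longrightarrow> (\<lambda>i. x i + s * b i) \<in> spnV S B"

lemma submodVD:
  assumes "submodV S M"
  shows "(\<lambda>_. 0) \<in> M" "x \<in> M \<Longrightarrow> y \<in> M \<Longrightarrow> (\<lambda>i. x i + y i) \<in> M" "s \<in> S \<Longrightarrow> x \<in> M \<Longrightarrow> (\<lambda>i. s * x i) \<in> M"
  using assms unfolding submodV_def by blast+

lemma spnV_add: assumes "y \<in> spnV S B" "x \<in> spnV S B" shows "(\<lambda>i. x i + y i) \<in> spnV S B"
  using assms
proof (induction y rule: spnV.induct)
  case spnV0 then show ?case by simp
next
  case (spnVS y s b)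
  then have "(\<lambda>i. (\<lambda>i. x i + y i) i + s * b i) \<in> spnV S B" by (intro spnV.spnVS) auto
  then show ?case by (simp add: add.assoc)
qed

lemma spnV_smult: assumes "x \<in> spnV S B" "subr S" "r \<in> S" shows "(\<lambda>i. r * x i) \<in> spnV S B"
  using assms
proof (induction x rule: spnV.induct)
  case spnV0 then show ?case using spnV.spnV0 by simp
next
  case (spnVS x s b)
  then have "(\<lambda>i. (\<lambda>i. r * x i) i + (r * s) * b i) \<in> spnV S B" by (intro spnV.spnVS) (auto simp: subrD)
  then show ?case by (simp add: algebra_simps)
qed

lemma spnV_mono: "x \<in> spnV S B \<Longrightarrow> B \<subseteq> B' \<Longrightarrow> x \<in> spnV S B'"
  by (induction rule: spnV.induct) (auto intro: spnV.intros)

lemma spnV_trans: assumes "x \<in> spnV S B" "B \<subseteq> spnV S C" "subr S" shows "x \<in> spnV S C"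
  using assms
proof (induction x rule: spnV.induct)
  case spnV0 show ?case by (rule spnV.spnV0)
next
  case (spnVS x s b)
  then show ?case using spnV_add[OF spnV_smult[of b S C s]] by blast
qed

lemma spnV_vecs: assumes "x \<in> spnV R B" "subr R" "B \<subseteq> vecs R Ix" shows "x \<in> vecs R Ix"
  using assms
proof (induction x rule: spnV.induct)
  case spnV0 then show ?case by (simp add: vecs_def subrD)
next
  case (spnVS x s b)
  then show ?case by (auto simp: vecs_def subrD)
qed

lemma spnV_finite: assumes "x \<in> spnV S B" shows "\<exists>B'. finite B' \<and> B' \<subseteq> B \<and> x \<in> spnV S B'"
  using assms
proof (induction x rule: spnV.induct)
  case spnV0 then show ?case using spnV.spnV0 by blast
next
  case (spnVS x s b)
  then obtain B' where "finite B'" "B' \<subseteq> B" "x \<in> spnV S B'" by blast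
  then show ?case using spnVS spnV.spnVS[OF spnV_mono[of x S B' "insert b B'"] \<open>s \<in> S\<close>, of b]
    by (intro exI[of _ "insert b B'"]) auto
qed

lemma submodV_spnV: "subr S \<Longrightarrow> submodV S (spnV S B)"
  unfolding submodV_def using spnV.spnV0 spnV_add spnV_smult by blast

lemma noethV:
  assumes R: "subr R" "noeth R" and "finite Ix"
  shows "\<forall>M. submodV R M \<longrightarrow> M \<subseteq> vecs R Ix \<longrightarrow> (\<exists>B. finite B \<and> B \<subseteq> M \<and> M \<subseteq> spnV R B)"
  using assms(3)
proof (induction Ix rule: finite_induct)
  case empty
  show ?case
  proof (intro allI impI)
    fix M :: "('b \<Rightarrow> 'a) set" assume "submodV R M" "M \<subseteq> vecs R {}"
    have "M \<subseteq> spnV R {}"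
    proof
      fix x assume "x \<in> M"
      then have "x = (\<lambda>_. 0)" using \<open>M \<subseteq> vecs R {}\<close> by (auto simp: vecs_def)
      then show "x \<in> spnV R {}" using spnV.spnV0 by simp
    qed
    then show "\<exists>B. finite B \<and> B \<subseteq> M \<and> M \<subseteq> spnV R B" by blast
  qed
next
  case (insert j Ix)
  show ?case
  proof (intro allI impI)
    fix M assume M: "submodV R M" "M \<subseteq> vecs R (insert j Ix)"
    define J where "J = (\<lambda>v. v j) ` M"
    have Jm: "submod R J" unfolding submod_def
    proof (intro conjI ballI)
      show "0 \<in> J" unfolding J_def using submodVD(1)[OF M(1)] by (rule rev_image_eqI) simp
      fix x y assume "x \<in> J" "y \<in> J"
      then obtain v w where vw: "v \<in> M" "w \<in> M" "x = v j" "y = w j" by (auto simp: J_def)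
      show "x + y \<in> J" unfolding J_def using submodVD(2)[OF M(1) vw(1,2)] by (rule rev_image_eqI) (simp add: vw)
    next
      fix s x assume "s \<in> R" "x \<in> J"
      then obtain v where vw: "v \<in> M" "x = v j" by (auto simp: J_def)
      show "s * x \<in> J" unfolding J_def using submodVD(3)[OF M(1) \<open>s \<in> R\<close> vw(1)] by (rule rev_image_eqI) (simp add: vw)
    qed
    have JR: "J \<subseteq> R" using M(2) by (auto simp: J_def vecs_def)
    have "\<forall>I. submod R I \<longrightarrow> I \<subseteq> R \<longrightarrow> (\<exists>B. finite B \<and> B \<subseteq> I \<and> I \<subseteq> spn R B)"
      using R(2) unfolding noeth_def .
    then have "\<exists>B. finite B \<and> B \<subseteq> J \<and> J \<subseteq> spn R B" using Jm JR by blast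
    then obtain BJ where BJ: "finite BJ" "BJ \<subseteq> J" "J \<subseteq> spn R BJ" by blast
    define lf where "lf c = (SOME v. v \<in> M \<and> v j = c)" for c
    have lf: "lf c \<in> M \<and> lf c j = c" if "c \<in> J" for c
    proof -
      have "\<exists>v. v \<in> M \<and> v j = c" using that by (auto simp: J_def)
      then show ?thesis unfolding lf_def by (rule someI_ex)
    qed
    define M' where "M' = {v \<in> M. v j = 0}"
    have M'm: "submodV R M'" unfolding submodV_def M'_def
      using submodVD(1)[OF M(1)] submodVD(2)[OF M(1)] submodVD(3)[OF M(1)] by simp
    have M'v: "M' \<subseteq> vecs R Ix"
    proof
      fix v assume "v \<in> M'"
      then have "v \<in> vecs R (insert j Ix)" "v j = 0" using M(2) by (auto simp: M'_def)
      then show "v \<in> vecs R Ix" unfolding vecs_def by auto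
    qed
    have "\<exists>B'. finite B' \<and> B' \<subseteq> M' \<and> M' \<subseteq> spnV R B'" using insert.IH M'm M'v by simp
    then obtain B' where B': "finite B'" "B' \<subseteq> M'" "M' \<subseteq> spnV R B'" by blast
    define B where "B = lf ` BJ \<union> B'"
    have lift: "\<exists>u. u \<in> spnV R B \<and> u \<in> M \<and> u j = c" if "c \<in> spn R BJ" for c
      using that
    proof (induction c rule: spn.induct)
      case spn0 show ?case using spnV.spnV0 submodVD(1)[OF M(1)] by (intro exI[of _ "\<lambda>_. 0"]) simp
    next
      case (spnS c s b)
      then obtain u where u: "u \<in> spnV R B" "u \<in> M" "u j = c" by blast
      have "b \<in> J" using \<open>b \<in> BJ\<close> BJ(2) by blast
      then have lb: "lf b \<in> M" "lf b j = b" using lf by simp_all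
      have "lf b \<in> B" using \<open>b \<in> BJ\<close> by (auto simp: B_def)
      show ?case
      proof (intro exI conjI)
        show "(\<lambda>i. u i + s * lf b i) \<in> spnV R B" by (rule spnV.spnVS[OF u(1) \<open>s \<in> R\<close> \<open>lf b \<in> B\<close>])
        show "(\<lambda>i. u i + s * lf b i) \<in> M" using submodVD(2)[OF M(1) u(2) submodVD(3)[OF M(1) \<open>s \<in> R\<close> lb(1)]] .
        show "u j + s * lf b j = c + s * b" using u lb by simp
      qed
    qed
    show "\<exists>B. finite B \<and> B \<subseteq> M \<and> M \<subseteq> spnV R B"
    proof (intro exI conjI)
      show "finite B" using BJ(1) B'(1) by (simp add: B_def)
      have "lf ` BJ \<subseteq> M" using lf BJ(2) by blast
      moreover have "B' \<subseteq> M" using B'(2) by (auto simp: M'_def)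
      ultimately show "B \<subseteq> M" by (simp add: B_def)
      show "M \<subseteq> spnV R B"
      proof
        fix v assume "v \<in> M"
        then have "v j \<in> J" by (simp add: J_def)
        then have "v j \<in> spn R BJ" using BJ(3) by blast
        then obtain u where u: "u \<in> spnV R B" "u \<in> M" "u j = v j" using lift[of "v j"] by blast
        have m1: "-1 \<in> R" using R(1) by (simp add: subrD)
        have "(\<lambda>i. v i + (-1) * u i) \<in> M" using submodVD(2)[OF M(1) \<open>v \<in> M\<close> submodVD(3)[OF M(1) m1 u(2)]] .
        then have "(\<lambda>i. v i - u i) \<in> M'" using u(3) by (simp add: M'_def)
        then have "(\<lambda>i. v i - u i) \<in> spnV R B'" using B'(3) by blast
        then have "(\<lambda>i. v i - u i) \<in> spnV R B" using spnV_mono[of _ R B' B] by (simp add: B_def)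
        from spnV_add[OF u(1) this] show "v \<in> spnV R B" by simp
      qed
    qed
  qed
qed

lemma noethV_fin:
  assumes R: "subr R" "noeth R" and Ix: "finite Ix" and X: "X \<subseteq> vecs R Ix"
  shows "\<exists>X0. finite X0 \<and> X0 \<subseteq> X \<and> X \<subseteq> spnV R X0"
proof -
  define M where "M = spnV R X"
  have "submodV R M" unfolding M_def by (rule submodV_spnV[OF R(1)])
  moreover have "M \<subseteq> vecs R Ix" unfolding M_def using spnV_vecs[OF _ R(1) X] by blast
  ultimately have "\<exists>B. finite B \<and> B \<subseteq> M \<and> M \<subseteq> spnV R B" using noethV[OF R Ix] by simp
  then obtain B where B: "finite B" "B \<subseteq> M" "M \<subseteq> spnV R B" by blast
  define Xb where "Xb b = (SOME B'. finite B' \<and> B' \<subseteq> X \<and> b \<in> spnV R B')" for b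
  have Xb: "finite (Xb b) \<and> Xb b \<subseteq> X \<and> b \<in> spnV R (Xb b)" if "b \<in> B" for b
  proof -
    have "b \<in> spnV R X" using that B(2) by (auto simp: M_def)
    then have "\<exists>B'. finite B' \<and> B' \<subseteq> X \<and> b \<in> spnV R B'" by (rule spnV_finite)
    then show ?thesis unfolding Xb_def by (rule someI_ex)
  qed
  define X0 where "X0 = (\<Union>b\<in>B. Xb b)"
  show ?thesis
  proof (intro exI conjI)
    show "finite X0" unfolding X0_def using B(1) Xb by blast
    show "X0 \<subseteq> X" unfolding X0_def using Xb by blast
    have "B \<subseteq> spnV R X0"
    proof
      fix b assume "b \<in> B"
      then have "b \<in> spnV R (Xb b)" "Xb b \<subseteq> X0" using Xb unfolding X0_def by blast+
      then show "b \<in> spnV R X0" using spnV_mono by blast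
    qed
    moreover have "X \<subseteq> M"
    proof
      fix x assume "x \<in> X"
      have "(\<lambda>i. (\<lambda>_. 0) i + 1 * x i) \<in> spnV R X"
        by (rule spnV.spnVS[OF spnV.spnV0 subrD(2)[OF R(1)] \<open>x \<in> X\<close>])
      then show "x \<in> M" by (simp add: M_def)
    qed
    ultimately show "X \<subseteq> spnV R X0" using B(3) spnV_trans[OF _ _ R(1)] by blast
  qed
qed

lemma foldl_wv: "foldl (\<lambda>a d. a * (k::nat) + d) x v = x * k ^ length v + foldl (\<lambda>a d. a * k + d) 0 v"
proof (induction v arbitrary: x)
  case Nil then show ?case by simp
next
  case (Cons d v)
  have "foldl (\<lambda>a d. a * k + d) x (d # v) = foldl (\<lambda>a d. a * k + d) (x * k + d) v" by simp
  also have "\<dots> = (x * k + d) * k ^ length v + foldl (\<lambda>a d. a * k + d) 0 v" by (rule Cons.IH)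
  also have "foldl (\<lambda>a d. a * k + d) 0 (d # v) = d * k ^ length v + foldl (\<lambda>a d. a * k + d) 0 v"
    using Cons.IH[of d] by simp
  ultimately show ?case by (simp add: algebra_simps)
qed

lemma word_val_append: "word_val k (u @ v) = word_val k u * k ^ length v + word_val k v"
  unfolding word_val_def by (simp add: foldl_wv[of k "foldl _ 0 u" v])

lemma word_val_Nil[simp]: "word_val k [] = 0" by (simp add: word_val_def)

lemma word_val_snoc: "word_val k (u @ [d]) = word_val k u * k + d"
  by (simp add: word_val_append word_val_def)

lemma word_val_zeros: "word_val k (replicate m 0 @ v) = word_val k v"
proof -
  have "word_val k (replicate m 0) = 0"
    by (induction m) (simp_all add: word_val_def)
  then show ?thesis by (simp add: word_val_append)
qed

lemma word_val_cons: "word_val k (d # v) = d * k ^ length v + word_val k v"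
  using word_val_append[of k "[d]" v] by (simp add: word_val_def)

lemma base_rep_pos: "k \<ge> 2 \<Longrightarrow> n > 0 \<Longrightarrow> base_rep k n = base_rep k (n div k) @ [n mod k]"
  by simp

lemma base_rep_0[simp]: "base_rep k 0 = []" by simp

declare base_rep.simps[simp del]

lemma base_rep_digits: "k \<ge> 2 \<Longrightarrow> set (base_rep k n) \<subseteq> {..<k}"
proof (induction n rule: less_induct)
  case (less n)
  show ?case
  proof (cases "n = 0")
    case False
    then have "n div k < n" using less.prems by simp
    then show ?thesis using less base_rep_pos[OF less.prems] False by auto
  qed simp
qed

lemma base_rep_val: "k \<ge> 2 \<Longrightarrow> word_val k (base_rep k n) = n"
proof (induction n rule: less_induct)
  case (less n)
  show ?case
  proof (cases "n = 0")
    case False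
    then have "n div k < n" using less.prems by simp
    then show ?thesis using less base_rep_pos[OF less.prems] False by (simp add: word_val_snoc)
  qed simp
qed

lemma base_rep_len: "k \<ge> 2 \<Longrightarrow> n < k ^ e \<Longrightarrow> length (base_rep k n) \<le> e"
proof (induction e arbitrary: n)
  case 0 then show ?case by simp
next
  case (Suc e)
  show ?case
  proof (cases "n = 0")
    case False
    have "n div k < k ^ e" using Suc.prems by (simp add: div_less_iff_less_mult mult.commute)
    then show ?thesis using Suc base_rep_pos[OF Suc.prems(1)] False by simp
  qed simp
qed

lemma base_rep_hd: "k \<ge> 2 \<Longrightarrow> n > 0 \<Longrightarrow> base_rep k n \<noteq> [] \<and> hd (base_rep k n) \<noteq> 0"
proof (induction n rule: less_induct)
  case (less n)
  show ?case
  proof (cases "n div k = 0")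
    case True
    then have "n mod k = n" using div_mult_mod_eq[of n k] by simp
    then show ?thesis using base_rep_pos[OF less.prems] True less.prems by simp
  next
    case False
    then have "n div k < n" using less.prems by simp
    then show ?thesis using less.IH[of "n div k"] less.prems base_rep_pos[OF less.prems] False by (simp add: hd_append)
  qed
qed

lemma word_val_pos: "k \<ge> 2 \<Longrightarrow> w \<noteq> [] \<Longrightarrow> hd w \<noteq> 0 \<Longrightarrow> word_val k w > 0"
  by (cases w) (auto simp: word_val_cons)

lemma base_rep_canon:
  assumes "k \<ge> 2" shows "w \<noteq> [] \<Longrightarrow> hd w \<noteq> 0 \<Longrightarrow> set w \<subseteq> {..<k} \<Longrightarrow> base_rep k (word_val k w) = w"
proof (induction w rule: rev_induct)
  case Nil then show ?case by simp
next
  case (snoc d u)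
  show ?case
  proof (cases "u = []")
    case True
    then have "d \<noteq> 0" "d < k" using snoc.prems by auto
    then show ?thesis using True base_rep_pos[OF assms, of d] by (simp add: word_val_def)
  next
    case False
    then have u: "hd u \<noteq> 0" "set u \<subseteq> {..<k}" "d < k" using snoc.prems by auto
    then have "word_val k u > 0" using word_val_pos[OF assms False] by simp
    then have pos: "word_val k (u @ [d]) > 0" using assms by (simp add: word_val_snoc)
    have "word_val k (u @ [d]) div k = word_val k u" "word_val k (u @ [d]) mod k = d"
      using u(3) by (simp_all add: word_val_snoc)
    then show ?thesis using base_rep_pos[OF assms pos] snoc.IH[OF False u(1,2)] by simp
  qed
qed

definition pad :: "nat \<Rightarrow> nat \<Rightarrow> nat \<Rightarrow> nat list" where
  "pad k e i = replicate (e - length (base_rep k i)) 0 @ base_rep k i"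

lemma pad_props: assumes "k \<ge> 2" "i < k ^ e"
  shows "length (pad k e i) = e" "word_val k (pad k e i) = i" "set (pad k e i) \<subseteq> {..<k}"
  using base_rep_len[OF assms] base_rep_val[OF assms(1)] base_rep_digits[OF assms(1)] assms(1)
  by (auto simp: pad_def word_val_zeros)

lemma base_rep_split: assumes "k \<ge> 2" "i < k ^ e" "n > 0"
  shows "base_rep k (k ^ e * n + i) = base_rep k n @ pad k e i"
proof -
  have h: "base_rep k n \<noteq> []" "hd (base_rep k n) \<noteq> 0" using base_rep_hd[OF assms(1,3)] by auto
  have "word_val k (base_rep k n @ pad k e i) = k ^ e * n + i"
    using pad_props[OF assms(1,2)] base_rep_val[OF assms(1)] by (simp add: word_val_append)
  moreover have "base_rep k (word_val k (base_rep k n @ pad k e i)) = base_rep k n @ pad k e i"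
    using h base_rep_digits[OF assms(1)] pad_props[OF assms(1,2)] by (intro base_rep_canon[OF assms(1)]) auto
  ultimately show ?thesis by simp
qed

lemma delta_star_append: "delta_star \<delta> q (u @ v) = delta_star \<delta> (delta_star \<delta> q u) v"
  by (induction u arbitrary: q) auto

lemma rho_star_append: "rho_star \<delta> \<rho> q (u @ v) = rho_star \<delta> \<rho> q u @ rho_star \<delta> \<rho> (delta_star \<delta> q u) v"
  by (induction u arbitrary: q) auto

lemma rho_star_digits: "(\<And>q a. a < k \<Longrightarrow> set (\<rho> q a) \<subseteq> {..<k}) \<Longrightarrow> set w \<subseteq> {..<k} \<Longrightarrow> set (rho_star \<delta> \<rho> q w) \<subseteq> {..<k}"
  by (induction w arbitrary: q) auto

primrec Cv :: "(nat \<Rightarrow> (nat \<Rightarrow> 'a) \<Rightarrow> (nat \<Rightarrow> 'a) \<Rightarrow> 'a::comm_ring_1) \<Rightarrow> ((nat \<Rightarrow> 'a) \<Rightarrow> 'a) \<Rightarrow> (nat \<Rightarrow> 'a) set \<Rightarrow> nat list \<Rightarrow> (nat \<Rightarrow> 'a) \<Rightarrow> 'a" where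
  "Cv A b S [] = (\<lambda>t. if t \<in> S then b t else 0)"
| "Cv A b S (d # v) = (\<lambda>u. if u \<in> S then (\<Sum>t\<in>S. Cv A b S v t * A d t u) else 0)"

lemma Cv_f:
  fixes f :: "nat \<Rightarrow> 'a::comm_ring_1"
  assumes bf: "\<And>n. f n = (\<Sum>t\<in>S. b t * t n)"
    and Af: "\<And>d s n. d < k \<Longrightarrow> s \<in> S \<Longrightarrow> s (k * n + d) = (\<Sum>t\<in>S. A d s t * t n)"
  shows "set v \<subseteq> {..<k} \<Longrightarrow> f (k ^ length v * n + word_val k v) = (\<Sum>t\<in>S. Cv A b S v t * t n)"
proof (induction v arbitrary: n)
  case Nil then show ?case using bf by simp
next
  case (Cons d v)
  have d: "d < k" "set v \<subseteq> {..<k}" using Cons.prems by auto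
  have "k ^ length (d # v) * n + word_val k (d # v) = k ^ length v * (k * n + d) + word_val k v"
    by (simp add: word_val_cons algebra_simps)
  then have "f (k ^ length (d # v) * n + word_val k (d # v)) = (\<Sum>t\<in>S. Cv A b S v t * t (k * n + d))"
    using Cons.IH[OF d(2)] by simp
  also have "\<dots> = (\<Sum>t\<in>S. Cv A b S v t * (\<Sum>u\<in>S. A d t u * u n))"
    using Af[OF d(1)] by (intro sum.cong) auto
  also have "\<dots> = (\<Sum>t\<in>S. \<Sum>u\<in>S. Cv A b S v t * A d t u * u n)"
    by (simp add: sum_distrib_left mult.assoc)
  also have "\<dots> = (\<Sum>u\<in>S. \<Sum>t\<in>S. Cv A b S v t * A d t u * u n)"
    by (rule sum.swap)
  also have "\<dots> = (\<Sum>u\<in>S. (\<Sum>t\<in>S. Cv A b S v t * A d t u) * u n)"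
    by (simp add: sum_distrib_right)
  also have "\<dots> = (\<Sum>u\<in>S. Cv A b S (d # v) u * u n)"
    by (intro sum.cong) auto
  finally show ?case .
qed

lemma Cv_vecs:
  assumes R: "subr R" and b: "\<And>t. t \<in> S \<Longrightarrow> b t \<in> R"
    and A: "\<And>d t u. d < k \<Longrightarrow> t \<in> S \<Longrightarrow> u \<in> S \<Longrightarrow> A d t u \<in> R"
  shows "set v \<subseteq> {..<k} \<Longrightarrow> Cv A b S v \<in> vecs R S"
proof (induction v)
  case Nil then show ?case using b by (auto simp: vecs_def)
next
  case (Cons d v)
  then have "Cv A b S v \<in> vecs R S" "d < k" by auto
  then have "(\<Sum>t\<in>S. Cv A b S v t * A d t u) \<in> R" if "u \<in> S" for u
    using that A R by (intro subr_sum) (auto simp: vecs_def subrD)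
  then show ?case by (auto simp: vecs_def)
qed

definition Phi :: "(nat \<Rightarrow> 'q) \<Rightarrow> (nat \<Rightarrow> nat) \<Rightarrow> (nat \<Rightarrow> 'a::comm_ring_1) set \<Rightarrow> ('q option \<times> (nat \<Rightarrow> 'a) \<Rightarrow> 'a) \<Rightarrow> nat \<Rightarrow> 'a" where
  "Phi st H S x n = (if n = 0 then (\<Sum>t\<in>S. x (None, t) * t 0) else (\<Sum>t\<in>S. x (Some (st n), t) * t (H n)))"

lemma Phi_zero: "Phi st H S (\<lambda>_. 0) n = 0"
  by (simp add: Phi_def)

lemma Phi_lin: "Phi st H S (\<lambda>j. y j + s * x j) n = Phi st H S y n + s * Phi st H S x n"
  by (simp add: Phi_def sum.distrib sum_distrib_left algebra_simps)

lemma Phi_span: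
  assumes "finite X0" "y \<in> spnV R X0"
  shows "\<exists>c. Phi st H S y = (\<lambda>n. \<Sum>z\<in>Phi st H S ` X0. c z * z n)"
  using assms(2)
proof (induction y rule: spnV.induct)
  case spnV0
  show ?case by (intro exI[of _ "\<lambda>_. 0"]) (simp add: fun_eq_iff Phi_zero)
next
  case (spnVS y s x)
  then obtain c where c: "Phi st H S y = (\<lambda>n. \<Sum>z\<in>Phi st H S ` X0. c z * z n)" by blast
  define P where "P = Phi st H S x"
  have P: "P \<in> Phi st H S ` X0" using \<open>x \<in> X0\<close> by (simp add: P_def)
  have fin: "finite (Phi st H S ` X0)" using assms(1) by simp
  show ?case
  proof (intro exI[of _ "\<lambda>z. c z + (if z = P then s else 0)"] ext)
    fix n
    have "(\<Sum>z\<in>Phi st H S ` X0. (c z + (if z = P then s else 0)) * z n)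
        = (\<Sum>z\<in>Phi st H S ` X0. c z * z n) + (\<Sum>z\<in>Phi st H S ` X0. (if z = P then s * z n else 0))"
      unfolding sum.distrib[symmetric] by (intro sum.cong) (auto simp: distrib_right)
    also have "(\<Sum>z\<in>Phi st H S ` X0. (if z = P then s * z n else 0)) = s * P n"
      using sum.delta[OF fin, of P "\<lambda>z. s * z n"] P by simp
    finally show "Phi st H S (\<lambda>i. y i + s * x i) n = (\<Sum>z\<in>Phi st H S ` X0. (c z + (if z = P then s else 0)) * z n)"
      using c Phi_lin[of st H S y s x n] by (simp add: P_def fun_eq_iff)
  qed
qed

lemma kernel_step:
  assumes "s \<in> k_kernel k f" "d < k"
  shows "(\<lambda>n. s (k * n + d)) \<in> k_kernel k f"
proof -
  obtain e i where s: "s = (\<lambda>n. f (k ^ e * n + i))" "i < k ^ e" using assms(1) unfolding k_kernel_def by blast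
  have "k ^ e * d + i < k ^ e * d + k ^ e" using s(2) by simp
  also have "\<dots> = k ^ e * (d + 1)" by (simp add: algebra_simps)
  also have "\<dots> \<le> k ^ e * k" using assms(2) by (intro mult_left_mono) auto
  finally have lt: "k ^ e * d + i < k ^ Suc e" by (simp add: mult.commute)
  have "(\<lambda>n. s (k * n + d)) = (\<lambda>n. f (k ^ Suc e * n + (k ^ e * d + i)))"
    using s(1) by (simp add: algebra_simps)
  then show ?thesis using lt unfolding k_kernel_def by blast
qed

lemma self_kernel: "f \<in> k_kernel k f"
  unfolding k_kernel_def by (rule CollectI, rule exI[of _ "0"], rule exI[of _ "0"]) simp

theorem lemma1:
  fixes k :: nat
    and f :: "nat \<Rightarrow> 'a::comm_ring_1"
    and \<delta> :: "'q::finite \<Rightarrow> nat \<Rightarrow> 'q"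
    and \<rho> :: "'q \<Rightarrow> nat \<Rightarrow> nat list"
    and q0 :: 'q
    and F :: "'q set"
  assumes "k \<ge> 2"
    and "k_regular k f"
    and "\<And>q a. a < k \<Longrightarrow> set (\<rho> q a) \<subseteq> {..<k}"
    and "\<And>n. delta_star \<delta> q0 (base_rep k n) \<in> F"
  shows "k_regular k (\<lambda>n. f (word_val k (rho_star \<delta> \<rho> q0 (base_rep k n))))"
proof -
  have k2: "k \<ge> 2" by (fact assms(1))
  obtain S where S: "finite S" "S \<subseteq> k_kernel k f" "\<And>h. h \<in> k_kernel k f \<Longrightarrow> \<exists>c. h = (\<lambda>n. \<Sum>s\<in>S. c s * s n)"
    using assms(2) unfolding k_regular_def by blast
  define A where "A d s = (SOME c. (\<lambda>n. s (k * n + d)) = (\<lambda>n. \<Sum>t\<in>S. c t * t n))" for d s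
  have A: "s (k * n + d) = (\<Sum>t\<in>S. A d s t * t n)" if "d < k" "s \<in> S" for d s n
  proof -
    have "\<exists>c. (\<lambda>n. s (k * n + d)) = (\<lambda>n. \<Sum>t\<in>S. c t * t n)"
      using S(3)[OF kernel_step[of s k f d]] that S(2) by blast
    then have "(\<lambda>n. s (k * n + d)) = (\<lambda>n. \<Sum>t\<in>S. A d s t * t n)"
      unfolding A_def by (rule someI_ex)
    then show ?thesis by (simp add: fun_eq_iff)
  qed
  define b where "b = (SOME c. f = (\<lambda>n. \<Sum>t\<in>S. c t * t n))"
  have bf: "f n = (\<Sum>t\<in>S. b t * t n)" for n
  proof -
    have "\<exists>c. f = (\<lambda>n. \<Sum>t\<in>S. c t * t n)" using S(3)[OF self_kernel] .
    then have "f = (\<lambda>n. \<Sum>t\<in>S. b t * t n)" unfolding b_def by (rule someI_ex)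
    then show ?thesis by (simp add: fun_eq_iff)
  qed
  define Gs where "Gs = (\<lambda>(d, s, t). A d s t) ` ({..<k} \<times> S \<times> S) \<union> b ` S"
  have "finite Gs" using S(1) by (simp add: Gs_def)
  then obtain R0 where R0: "subr R0" "noeth R0" "Gs \<subseteq> R0" using noeth_subring by blast
  have bR: "b t \<in> R0" if "t \<in> S" for t using that R0(3) by (auto simp: Gs_def)
  have AR: "A d t u \<in> R0" if "d < k" "t \<in> S" "u \<in> S" for d t u
  proof -
    have "A d t u \<in> Gs" unfolding Gs_def using that by (intro UnI1 image_eqI[of _ _ "(d, t, u)"]) auto
    then show ?thesis using R0(3) by blast
  qed
  define C where "C = Cv A b S"
  have Cf: "f (k ^ length v * n + word_val k v) = (\<Sum>t\<in>S. C v t * t n)" if "set v \<subseteq> {..<k}" for v n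
    unfolding C_def by (rule Cv_f[where f=f and S=S and b=b and k=k and A=A, OF bf A that])
  have CR: "C v \<in> vecs R0 S" if "set v \<subseteq> {..<k}" for v
    unfolding C_def by (rule Cv_vecs[OF R0(1) bR AR that])
  define g where "g = (\<lambda>n. f (word_val k (rho_star \<delta> \<rho> q0 (base_rep k n))))"
  define H where "H n = word_val k (rho_star \<delta> \<rho> q0 (base_rep k n))" for n
  define st where "st n = delta_star \<delta> q0 (base_rep k n)" for n
  define X where "X e i = (\<lambda>(qo, t). case qo of None \<Rightarrow> C (rho_star \<delta> \<rho> q0 (base_rep k i)) t
      | Some p \<Rightarrow> C (rho_star \<delta> \<rho> p (pad k e i)) t)" for e i
  define Ph where "Ph = Phi st H S"
  have dig1: "set (rho_star \<delta> \<rho> q (base_rep k i)) \<subseteq> {..<k}" for q i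
    by (rule rho_star_digits[OF assms(3) base_rep_digits[OF k2]])
  have dig2: "set (rho_star \<delta> \<rho> q (pad k e i)) \<subseteq> {..<k}" if "i < k ^ e" for q e i
    by (rule rho_star_digits[OF assms(3) pad_props(3)[OF k2 that]])
  have gX: "(\<lambda>n. g (k ^ e * n + i)) = Ph (X e i)" if "i < k ^ e" for e i
  proof
    fix n
    show "g (k ^ e * n + i) = Ph (X e i) n"
    proof (cases "n = 0")
      case True
      have "g (k ^ e * n + i) = f (k ^ length (rho_star \<delta> \<rho> q0 (base_rep k i)) * 0 + word_val k (rho_star \<delta> \<rho> q0 (base_rep k i)))"
        using True by (simp add: g_def)
      also have "\<dots> = (\<Sum>t\<in>S. C (rho_star \<delta> \<rho> q0 (base_rep k i)) t * t 0)" by (rule Cf[OF dig1])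
      finally show ?thesis using True by (simp add: Ph_def Phi_def X_def)
    next
      case False
      define u where "u = rho_star \<delta> \<rho> q0 (base_rep k n)"
      define v where "v = rho_star \<delta> \<rho> (st n) (pad k e i)"
      have "base_rep k (k ^ e * n + i) = base_rep k n @ pad k e i"
        using base_rep_split[OF k2 that] False by simp
      then have "rho_star \<delta> \<rho> q0 (base_rep k (k ^ e * n + i)) = u @ v"
        by (simp add: rho_star_append u_def v_def st_def)
      then have "g (k ^ e * n + i) = f (k ^ length v * H n + word_val k v)"
        by (simp add: g_def word_val_append H_def u_def mult.commute)
      also have "\<dots> = (\<Sum>t\<in>S. C v t * t (H n))" using Cf[OF dig2[OF that]] by (simp add: v_def)
      finally show ?thesis using False by (simp add: Ph_def Phi_def X_def v_def)
    qed
  qed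
  define Ix where "Ix = (UNIV :: 'q option set) \<times> S"
  have Ixf: "finite Ix" using S(1) by (simp add: Ix_def)
  define XS where "XS = {X e i | e i. i < k ^ e}"
  have XSv: "XS \<subseteq> vecs R0 Ix"
  proof
    fix x assume "x \<in> XS"
    then obtain e i where x: "x = X e i" "i < k ^ e" by (auto simp: XS_def)
    have c1: "C (rho_star \<delta> \<rho> q0 (base_rep k i)) \<in> vecs R0 S" using CR[OF dig1] .
    have c2: "C (rho_star \<delta> \<rho> p (pad k e i)) \<in> vecs R0 S" for p using CR[OF dig2[OF x(2)]] .
    show "x \<in> vecs R0 Ix" unfolding vecs_def
    proof (intro CollectI conjI allI ballI impI)
      fix j assume "j \<in> Ix"
      then obtain qo t where "j = (qo, t)" "t \<in> S" by (cases j) (auto simp: Ix_def)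
      then show "x j \<in> R0" using c1 c2 x(1) by (cases qo) (auto simp: X_def vecs_def)
    next
      fix j assume "j \<notin> Ix"
      then obtain qo t where "j = (qo, t)" "t \<notin> S" by (cases j) (auto simp: Ix_def)
      then show "x j = 0" using c1 c2 x(1) by (cases qo) (auto simp: X_def vecs_def)
    qed
  qed
  obtain X0 where X0: "finite X0" "X0 \<subseteq> XS" "XS \<subseteq> spnV R0 X0"
    using noethV_fin[OF R0(1,2) Ixf XSv] by blast
  have "k_regular k g"
    unfolding k_regular_def
  proof (intro exI[of _ "Ph ` X0"] conjI ballI)
    show "finite (Ph ` X0)" using X0(1) by simp
    show "Ph ` X0 \<subseteq> k_kernel k g"
    proof
      fix z assume "z \<in> Ph ` X0"
      then obtain e i where "z = Ph (X e i)" "i < k ^ e" using X0(2) by (auto simp: XS_def)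
      then have "z = (\<lambda>n. g (k ^ e * n + i))" using gX by simp
      then show "z \<in> k_kernel k g" using \<open>i < k ^ e\<close> unfolding k_kernel_def by blast
    qed
    fix h assume "h \<in> k_kernel k g"
    then obtain e i where h: "h = (\<lambda>n. g (k ^ e * n + i))" "i < k ^ e" unfolding k_kernel_def by blast
    then have "X e i \<in> XS" by (auto simp: XS_def)
    then have "X e i \<in> spnV R0 X0" using X0(3) by blast
    then obtain c where "Ph (X e i) = (\<lambda>n. \<Sum>z\<in>Ph ` X0. c z * z n)"
      using Phi_span[OF X0(1)] unfolding Ph_def by blast
    then show "\<exists>c. h = (\<lambda>n. \<Sum>s\<in>Ph ` X0. c s * s n)" using h gX by auto
  qed
  then show ?thesis by (simp add: g_def)
qed

end
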